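(* Assume the setting and algorithm described in the context. If $0<\alpha\le\frac{\sqrt n}{\sqrt{8m}\,L}$, then for all $k\ge0$, almost surely, $$\mathbb E\big[t^{k+1}\,|\,\mathcal F^k\big]\le\Big(1-\frac1{4m}\Big)t^k+4m\alpha^2\|\overline{\nabla\mathbf f}(x^k)\|^2+\frac{9}{4mn}\|x^k-Jx^k\|^2 .$$
   Context: Setting. Let $n,m,p\ge1$ be integers and $\mathcal V=\{1,\dots,n\}$. For each $i\in\mathcal V$ and $j\in\{1,\dots,m\}$, $f_{i,j}:\mathbb R^p\to\mathbb R$ is differentiable and $L$-smooth for some $L>0$, i.e. $\|\nabla f_{i,j}(x)-\nabla f_{i,j}(y)\|\le L\|x-y\|$ for all $x,y\in\mathbb R^p$. Let $f_i:=\frac1m\sum_{j=1}^m f_{i,j}$ and $F:=\frac1n\sum_{i=1}^n f_i$, and assume $F^*:=\inf_{x\in\mathbb R^p}F(x)>-\infty$. Let $\underline W=(\underline w_{ir})\in\mathbb R^{n\times n}$ be a nonnegative, primitive, doubly stochastic matrix ($\underline W\mathbf 1_n=\mathbf 1_n$, $\mathbf 1_n^\top\underline W=\mathbf 1_n^\top$), and let $\lambda\in[0,1)$ be its second largest singular value. Any expression with $\lambda$ in a denominator is read as $+\infty$ when $\lambda=0$. Algorithm GT-SAGA with step-size $\alpha>0$: fix a deterministic $\bar x^0\in\mathbb R^p$; for all $i\in\mathcal V$ set $x_i^0=\bar x^0$, $z_{i,j}^0=x_i^0$ for all $j$, $y_i^0=0$, $g_i^{-1}=0$. For $k=0,1,2,\dots$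 and every $i\in\mathcal V$: draw $\tau_i^k$ uniformly from $\{1,\dots,m\}$; set $g_i^k=\nabla f_{i,\tau_i^k}(x_i^k)-\nabla f_{i,\tau_i^k}(z_{i,\tau_i^k}^k)+\frac1m\sum_{j=1}^m\nabla f_{i,j}(z_{i,j}^k)$; set $y_i^{k+1}=\sum_{r=1}^n\underline w_{ir}(y_r^k+g_r^k-g_r^{k-1})$; set $x_i^{k+1}=\sum_{r=1}^n\underline w_{ir}(x_r^k-\alpha y_r^{k+1})$; draw $s_i^k$ uniformly from $\{1,\dots,m\}$; set $z_{i,j}^{k+1}=x_i^k$ if $j=s_i^k$ and $z_{i,j}^{k+1}=z_{i,j}^k$ otherwise. The family $\{\tau_i^k,s_i^k: i\in\mathcal V,k\ge0\}$ is independent. Notation. $x^k,y^k,g^k\in\mathbb R^{np}$ stack the $x_i^k$, $y_i^k$, $g_i^k$; $\nabla\mathbf f(x^k)\in\mathbb R^{np}$ stacks $\nabla f_i(x_i^k)$, $i=1,\dots,n$; $W=\underline W\otimes I_p$, $J=(\frac1n\mathbf 1_n\mathbf 1_n^\top)\otimes I_p$; $\bar x^k=\frac1n\sum_i x_i^k$, $\bar g^k=\frac1n\sum_i g_i^k$, $\overline{\nabla\mathbf f}(x^k)=\frac1n\sum_i\nabla f_i(x_i^k)$. $\mathcal F^0$ is the trivial $\sigma$-algebra and $\mathcal F^k=\sigma(\{\tau_i^t,s_i^t:i\in\mathcal V,\ t\le k-1\})$ for $k\ge1$. $t^k:=\frac1n\sum_{i=1}^n\frac1m\sum_{j=1}^m\|\bar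 x^k-z_{i,j}^k\|^2$. $\|\nabla\mathbf f(x^0)\|^2:=\sum_{i=1}^n\|\nabla f_i(\bar x^0)\|^2$. Norms are Euclidean (spectral for matrices); vector and matrix inequalities are entrywise. *)

theory Defs
  imports "HOL-Analysis.Analysis" "HOL-Probability.Probability"
begin

text \<open>Nodes are the elements of a finite type 'n (so n = CARD('n)); R^p is an
  abstract Euclidean space 'v. The mixing matrix is W :: real^'n^'n.\<close>

primrec mat_pow :: "real^'n^'n \<Rightarrow> nat \<Rightarrow> real^'n^'n" where
  "mat_pow A 0 = mat 1"
| "mat_pow A (Suc k) = A ** mat_pow A k"

definition nonneg_primitive_doubly_stochastic :: "real^'n^'n \<Rightarrow> bool" where
  "nonneg_primitive_doubly_stochastic W \<longleftrightarrow>
     (\<forall>i r. W $ i $ r \<ge> 0) \<and>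
     (\<forall>i. (\<Sum>r\<in>UNIV. W $ i $ r) = 1) \<and>
     (\<forall>r. (\<Sum>i\<in>UNIV. W $ i $ r) = 1) \<and>
     (\<exists>k. \<forall>i r. mat_pow W k $ i $ r > 0)"

text \<open>GT-SAGA state at iteration k: (x^k, y^k, z^k, g^{k-1}).
  grad i j is the gradient of f_{i,j}; tau k i, s k i are the sampled indices.\<close>

type_synonym ('n,'v) gt_state = "('n \<Rightarrow> 'v) \<times> ('n \<Rightarrow> 'v) \<times> ('n \<Rightarrow> nat \<Rightarrow> 'v) \<times> ('n \<Rightarrow> 'v)"

definition gt_g :: "('n \<Rightarrow> nat \<Rightarrow> 'v \<Rightarrow> 'v::euclidean_space) \<Rightarrow> nat \<Rightarrow>
    ('n \<Rightarrow> 'v) \<Rightarrow> ('n \<Rightarrow> nat \<Rightarrow> 'v) \<Rightarrow> ('n \<Rightarrow> nat) \<Rightarrow> 'n \<Rightarrow> 'v" where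
  "gt_g grad m x z tau i =
     grad i (tau i) (x i) - grad i (tau i) (z i (tau i))
     + (1 / real m) *\<^sub>R (\<Sum>j=1..m. grad i j (z i j))"

primrec gt_saga :: "real^'n^'n \<Rightarrow> ('n \<Rightarrow> nat \<Rightarrow> 'v \<Rightarrow> 'v::euclidean_space) \<Rightarrow> nat \<Rightarrow> real \<Rightarrow> 'v \<Rightarrow>
    (nat \<Rightarrow> 'n \<Rightarrow> nat) \<Rightarrow> (nat \<Rightarrow> 'n \<Rightarrow> nat) \<Rightarrow> nat \<Rightarrow> ('n::finite,'v) gt_state" where
  "gt_saga W grad m \<alpha> x0 tau s 0 = ((\<lambda>i. x0), (\<lambda>i. 0), (\<lambda>i j. x0), (\<lambda>i. 0))"
| "gt_saga W grad m \<alpha> x0 tau s (Suc k) =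
     (case gt_saga W grad m \<alpha> x0 tau s k of (x, y, z, gprev) \<Rightarrow>
       let g = gt_g grad m x z (tau k);
           y' = (\<lambda>i. \<Sum>r\<in>UNIV. W $ i $ r *\<^sub>R (y r + g r - gprev r));
           x' = (\<lambda>i. \<Sum>r\<in>UNIV. W $ i $ r *\<^sub>R (x r - \<alpha> *\<^sub>R y' r));
           z' = (\<lambda>i j. if j = s k i then x i else z i j)
       in (x', y', z', g))"

definition gt_x :: "real^'n^'n \<Rightarrow> ('n \<Rightarrow> nat \<Rightarrow> 'v \<Rightarrow> 'v::euclidean_space) \<Rightarrow> nat \<Rightarrow> real \<Rightarrow> 'v \<Rightarrow>
    (nat \<Rightarrow> 'n \<Rightarrow> nat) \<Rightarrow> (nat \<Rightarrow> 'n \<Rightarrow> nat) \<Rightarrow> nat \<Rightarrow> 'n::finite \<Rightarrow> 'v" where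
  "gt_x W grad m \<alpha> x0 tau s k = fst (gt_saga W grad m \<alpha> x0 tau s k)"

definition gt_z :: "real^'n^'n \<Rightarrow> ('n \<Rightarrow> nat \<Rightarrow> 'v \<Rightarrow> 'v::euclidean_space) \<Rightarrow> nat \<Rightarrow> real \<Rightarrow> 'v \<Rightarrow>
    (nat \<Rightarrow> 'n \<Rightarrow> nat) \<Rightarrow> (nat \<Rightarrow> 'n \<Rightarrow> nat) \<Rightarrow> nat \<Rightarrow> 'n::finite \<Rightarrow> nat \<Rightarrow> 'v" where
  "gt_z W grad m \<alpha> x0 tau s k = fst (snd (snd (gt_saga W grad m \<alpha> x0 tau s k)))"

definition avg :: "('n::finite \<Rightarrow> 'v::real_vector) \<Rightarrow> 'v" where
  "avg x = (1 / real CARD('n)) *\<^sub>R (\<Sum>i\<in>UNIV. x i)"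

definition tk :: "nat \<Rightarrow> ('n::finite \<Rightarrow> 'v::real_normed_vector) \<Rightarrow> ('n \<Rightarrow> nat \<Rightarrow> 'v) \<Rightarrow> real" where
  "tk m x z = (1 / real CARD('n)) * (\<Sum>i\<in>UNIV. (1 / real m) * (\<Sum>j=1..m. (norm (avg x - z i j))\<^sup>2))"

definition consensus_err :: "('n::finite \<Rightarrow> 'v::real_normed_vector) \<Rightarrow> real" where
  "consensus_err x = (\<Sum>i\<in>UNIV. (norm (x i - avg x))\<^sup>2)"

definition avg_grad :: "('n::finite \<Rightarrow> nat \<Rightarrow> 'v \<Rightarrow> 'v::real_normed_vector) \<Rightarrow> nat \<Rightarrow> ('n \<Rightarrow> 'v) \<Rightarrow> 'v" where
  "avg_grad grad m x = avg (\<lambda>i. (1 / real m) *\<^sub>R (\<Sum>j=1..m. grad i j (x i)))"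

definition filt :: "'a measure \<Rightarrow> (nat \<Rightarrow> 'n \<Rightarrow> 'a \<Rightarrow> nat) \<Rightarrow> (nat \<Rightarrow> 'n \<Rightarrow> 'a \<Rightarrow> nat) \<Rightarrow> nat \<Rightarrow> 'a measure" where
  "filt M tau s k = sigma (space M)
     ({tau t i -` A \<inter> space M | t i A. t < k} \<union> {s t i -` A \<inter> space M | t i A. t < k})"

end

theory Submission
  imports Defs
begin

lemma sum_PiE_single:
  fixes f :: "'c \<Rightarrow> 'b::real_vector"
  assumes I: "finite I" "i \<in> I" and A: "\<And>j. j \<in> I \<Longrightarrow> finite (A j)"
  shows "(\<Sum>\<sigma>\<in>PiE I A. f (\<sigma> i)) = real (\<Prod>j\<in>I-{i}. card (A j)) *\<^sub>R (\<Sum>a\<in>A i. f a)"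
proof -
  have fin: "finite (PiE I A)" using I A by (intro finite_PiE) auto
  have "(\<Sum>\<sigma>\<in>PiE I A. f (\<sigma> i)) = (\<Sum>a\<in>A i. \<Sum>\<sigma>\<in>{\<sigma>. \<sigma> \<in> PiE I A \<and> \<sigma> i = a}. f (\<sigma> i))"
    by (rule sum.group[symmetric]) (use fin A I in \<open>auto simp: PiE_iff\<close>)
  also have "\<dots> = (\<Sum>a\<in>A i. \<Sum>\<sigma>\<in>PiE I (A(i:={a})). f a)"
  proof (rule sum.cong[OF refl])
    fix a assume a: "a \<in> A i"
    have "{\<sigma>. \<sigma> \<in> PiE I A \<and> \<sigma> i = a} = PiE I (A(i:={a}))"
      using a I unfolding set_eq_iff PiE_iff extensional_def by (auto split: if_splits)
    then show "(\<Sum>\<sigma>\<in>{\<sigma>. \<sigma> \<in> PiE I A \<and> \<sigma> i = a}. f (\<sigma> i)) = (\<Sum>\<sigma>\<in>PiE I (A(i:={a})). f a)"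
      by (auto intro!: sum.cong)
  qed
  also have "\<dots> = (\<Sum>a\<in>A i. real (\<Prod>j\<in>I-{i}. card (A j)) *\<^sub>R f a)"
  proof (rule sum.cong[OF refl])
    fix a assume a: "a \<in> A i"
    have "card (PiE I (A(i:={a}))) = (\<Prod>j\<in>I. card ((A(i:={a})) j))" using card_PiE[OF I(1), of "A(i:={a})"] by (simp add: fun_upd_def)
    also have "\<dots> = card ((A(i:={a})) i) * (\<Prod>j\<in>I-{i}. card ((A(i:={a})) j))"
      using I by (simp add: prod.remove)
    also have "\<dots> = (\<Prod>j\<in>I-{i}. card (A j))" by (auto intro!: prod.cong)
    finally show "(\<Sum>\<sigma>\<in>PiE I (A(i:={a})). f a) = real (\<Prod>j\<in>I-{i}. card (A j)) *\<^sub>R f a"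
      by (simp add: sum_constant_scaleR)
  qed
  also have "\<dots> = real (\<Prod>j\<in>I-{i}. card (A j)) *\<^sub>R (\<Sum>a\<in>A i. f a)"
    by (simp add: scaleR_sum_right)
  finally show ?thesis .
qed

lemma sum_PiE_pair_zero:
  fixes F :: "'c \<Rightarrow> 'c \<Rightarrow> 'b::real_vector"
  assumes I: "finite I" "i \<in> I" "l \<in> I" "i \<noteq> l" and A: "\<And>j. j \<in> I \<Longrightarrow> finite (A j)"
    and Z: "\<And>a. a \<in> A i \<Longrightarrow> (\<Sum>b\<in>A l. F a b) = 0"
  shows "(\<Sum>\<sigma>\<in>PiE I A. F (\<sigma> i) (\<sigma> l)) = 0"
proof -
  have fin: "finite (PiE I A)" using I A by (intro finite_PiE) auto
  have "(\<Sum>\<sigma>\<in>PiE I A. F (\<sigma> i) (\<sigma> l)) = (\<Sum>a\<in>A i. \<Sum>\<sigma>\<in>{\<sigma>. \<sigma> \<in> PiE I A \<and> \<sigma> i = a}. F (\<sigma> i) (\<sigma> l))"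
    by (rule sum.group[symmetric]) (use fin A I in \<open>auto simp: PiE_iff\<close>)
  also have "\<dots> = (\<Sum>a\<in>A i. \<Sum>\<sigma>\<in>PiE I (A(i:={a})). F a (\<sigma> l))"
  proof (rule sum.cong[OF refl])
    fix a assume a: "a \<in> A i"
    have "{\<sigma>. \<sigma> \<in> PiE I A \<and> \<sigma> i = a} = PiE I (A(i:={a}))"
      using a I unfolding set_eq_iff PiE_iff extensional_def by (auto split: if_splits)
    then show "(\<Sum>\<sigma>\<in>{\<sigma>. \<sigma> \<in> PiE I A \<and> \<sigma> i = a}. F (\<sigma> i) (\<sigma> l)) = (\<Sum>\<sigma>\<in>PiE I (A(i:={a})). F a (\<sigma> l))"
      by (auto intro!: sum.cong)
  qed
  also have "\<dots> = 0"
  proof (rule sum.neutral, intro ballI)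
    fix a assume a: "a \<in> A i"
    have "(\<Sum>\<sigma>\<in>PiE I (A(i:={a})). F a (\<sigma> l)) = real (\<Prod>j\<in>I-{l}. card ((A(i:={a})) j)) *\<^sub>R (\<Sum>b\<in>(A(i:={a})) l. F a b)"
      by (rule sum_PiE_single) (use I A in auto)
    also have "\<dots> = 0" using Z[OF a] I by simp
    finally show "(\<Sum>\<sigma>\<in>PiE I (A(i:={a})). F a (\<sigma> l)) = 0" .
  qed
  finally show ?thesis .
qed

lemma sum_T_single:
  fixes f :: "nat \<Rightarrow> 'b::real_vector" and i :: "'n::finite"
  assumes m: "m \<ge> 1"
  shows "(\<Sum>\<sigma>\<in>PiE (UNIV::'n set) (\<lambda>_. {1..m}). f (\<sigma> i))
        = (real (card (PiE (UNIV::'n set) (\<lambda>_. {1..m::nat}))) / real m) *\<^sub>R (\<Sum>a\<in>{1..m}. f a)"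
proof -
  have "(\<Sum>\<sigma>\<in>PiE (UNIV::'n set) (\<lambda>_. {1..m}). f (\<sigma> i))
      = real (\<Prod>j\<in>UNIV-{i}. card {1..m}) *\<^sub>R (\<Sum>a\<in>{1..m}. f a)"
    by (rule sum_PiE_single) auto
  moreover have "(\<Prod>j\<in>(UNIV::'n set)-{i}. card {1..m}) = m ^ (CARD('n) - 1)"
    by (simp add: card_Diff_singleton)
  moreover have "card (PiE (UNIV::'n set) (\<lambda>_. {1..m::nat})) = m ^ CARD('n)"
    by (simp add: card_PiE)
  moreover have "real (m ^ CARD('n)) / real m = real (m ^ (CARD('n) - 1))"
  proof -
    have "CARD('n) = Suc (CARD('n) - 1)" using finite_UNIV_card_ge_0[where 'a='n] by simp
    then have "m ^ CARD('n) = m * m ^ (CARD('n) - 1)" by (metis power_Suc)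
    then show ?thesis using m by simp
  qed
  ultimately show ?thesis by simp
qed

lemma var_identity:
  fixes d :: "'n::finite \<Rightarrow> nat \<Rightarrow> 'v::euclidean_space" and p :: 'v
  assumes m: "m \<ge> 1" and Z: "\<And>i. (\<Sum>a\<in>{1..m}. d i a) = 0"
  shows "(\<Sum>\<tau>\<in>PiE (UNIV::'n set) (\<lambda>_. {1..m}). (norm (p - \<alpha> *\<^sub>R ((1/real CARD('n)) *\<^sub>R (\<Sum>i\<in>UNIV. d i (\<tau> i)))))\<^sup>2)
    = real (card (PiE (UNIV::'n set) (\<lambda>_. {1..m::nat}))) * ((norm p)\<^sup>2 + \<alpha>\<^sup>2 / (real CARD('n))\<^sup>2 * (1/real m) * (\<Sum>i\<in>UNIV. \<Sum>a\<in>{1..m}. (norm (d i a))\<^sup>2))"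
proof -
  define T where "T = PiE (UNIV::'n set) (\<lambda>_. {1..m::nat})"
  define N where "N = real CARD('n)"
  define cT where "cT = real (card T)"
  define D where "D = (\<lambda>\<tau>. (1/N) *\<^sub>R (\<Sum>i\<in>UNIV. d i (\<tau> i)))"
  have fT: "finite T" unfolding T_def by (intro finite_PiE) auto
  have single: "\<And>f::nat \<Rightarrow> real. \<And>i. (\<Sum>\<tau>\<in>T. f (\<tau> i)) = cT / real m * (\<Sum>a\<in>{1..m}. f a)"
  proof -
    fix f :: "nat \<Rightarrow> real" and i
    show "(\<Sum>\<tau>\<in>T. f (\<tau> i)) = cT / real m * (\<Sum>a\<in>{1..m}. f a)"
      using sum_T_single[OF m, of f i] unfolding T_def cT_def by simp
  qed
  have pt: "(norm (p - \<alpha> *\<^sub>R D \<tau>))\<^sup>2 = (norm p)\<^sup>2 - 2 * \<alpha> * (p \<bullet> D \<tau>) + \<alpha>\<^sup>2 * (norm (D \<tau>))\<^sup>2" for \<tau>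
    unfolding power2_norm_eq_inner by (simp add: inner_diff_left inner_diff_right inner_commute algebra_simps power2_eq_square)
  have cross: "(\<Sum>\<tau>\<in>T. p \<bullet> D \<tau>) = 0"
  proof -
    have "(\<Sum>\<tau>\<in>T. p \<bullet> D \<tau>) = (1/N) * (\<Sum>i\<in>UNIV. \<Sum>\<tau>\<in>T. p \<bullet> d i (\<tau> i))"
      unfolding D_def by (simp add: inner_sum_right sum_distrib_left sum.swap[of _ T])
    also have "\<dots> = (1/N) * (\<Sum>i\<in>UNIV. cT / real m * (\<Sum>a\<in>{1..m}. p \<bullet> d i a))"
      by (intro arg_cong[where f="\<lambda>x. (1/N)*x"] sum.cong refl single)
    also have "\<dots> = 0" using Z by (simp add: inner_sum_right[symmetric])
    finally show ?thesis .
  qed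
  have sq: "(\<Sum>\<tau>\<in>T. (norm (D \<tau>))\<^sup>2) = 1 / N\<^sup>2 * (cT / real m * (\<Sum>i\<in>UNIV. \<Sum>a\<in>{1..m}. (norm (d i a))\<^sup>2))"
  proof -
    have e: "(norm (D \<tau>))\<^sup>2 = 1 / N\<^sup>2 * (\<Sum>i\<in>UNIV. \<Sum>l\<in>UNIV. d i (\<tau> i) \<bullet> d l (\<tau> l))" for \<tau>
      unfolding D_def power2_norm_eq_inner inner_scaleR_left inner_scaleR_right inner_sum_left
      unfolding inner_sum_right by (simp add: power2_eq_square)
    have inner: "(\<Sum>l\<in>UNIV. \<Sum>\<tau>\<in>T. d i (\<tau> i) \<bullet> d l (\<tau> l)) = cT / real m * (\<Sum>a\<in>{1..m}. (norm (d i a))\<^sup>2)" for i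
    proof -
      have "(\<Sum>l\<in>UNIV. \<Sum>\<tau>\<in>T. d i (\<tau> i) \<bullet> d l (\<tau> l))
          = (\<Sum>\<tau>\<in>T. d i (\<tau> i) \<bullet> d i (\<tau> i)) + (\<Sum>l\<in>UNIV-{i}. \<Sum>\<tau>\<in>T. d i (\<tau> i) \<bullet> d l (\<tau> l))"
        by (simp add: sum.remove)
      also have "(\<Sum>l\<in>UNIV-{i}. \<Sum>\<tau>\<in>T. d i (\<tau> i) \<bullet> d l (\<tau> l)) = 0"
      proof (rule sum.neutral, intro ballI)
        fix l assume l: "l \<in> UNIV - {i}"
        show "(\<Sum>\<tau>\<in>T. d i (\<tau> i) \<bullet> d l (\<tau> l)) = 0"
          unfolding T_def
          by (rule sum_PiE_pair_zero[where F="\<lambda>a b. d i a \<bullet> d l b"]) (use l Z in \<open>auto simp: inner_sum_right[symmetric]\<close>)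
      qed
      also have "(\<Sum>\<tau>\<in>T. d i (\<tau> i) \<bullet> d i (\<tau> i)) = cT / real m * (\<Sum>a\<in>{1..m}. (norm (d i a))\<^sup>2)"
        using single[of "\<lambda>a. d i a \<bullet> d i a" i] by (simp add: power2_norm_eq_inner)
      finally show ?thesis by simp
    qed
    have "(\<Sum>\<tau>\<in>T. (norm (D \<tau>))\<^sup>2) = 1 / N\<^sup>2 * (\<Sum>i\<in>UNIV. \<Sum>l\<in>UNIV. \<Sum>\<tau>\<in>T. d i (\<tau> i) \<bullet> d l (\<tau> l))"
      unfolding e by (simp add: sum_distrib_left sum.swap[of _ T])
    also have "\<dots> = 1 / N\<^sup>2 * (\<Sum>i\<in>UNIV. cT / real m * (\<Sum>a\<in>{1..m}. (norm (d i a))\<^sup>2))"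
      by (intro arg_cong[where f="\<lambda>x. 1 / N\<^sup>2*x"] sum.cong refl inner)
    finally show ?thesis by (simp add: sum_distrib_left)
  qed
  have "(\<Sum>\<tau>\<in>T. (norm (p - \<alpha> *\<^sub>R D \<tau>))\<^sup>2) = cT * (norm p)\<^sup>2 - 2 * \<alpha> * (\<Sum>\<tau>\<in>T. p \<bullet> D \<tau>) + \<alpha>\<^sup>2 * (\<Sum>\<tau>\<in>T. (norm (D \<tau>))\<^sup>2)"
    unfolding pt cT_def by (simp add: sum.distrib sum_subtractf sum_distrib_left)
  also have "\<dots> = cT * ((norm p)\<^sup>2 + \<alpha>\<^sup>2 / N\<^sup>2 * (1/real m) * (\<Sum>i\<in>UNIV. \<Sum>a\<in>{1..m}. (norm (d i a))\<^sup>2))"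
    unfolding cross sq by (simp add: field_simps)
  finally show ?thesis unfolding T_def cT_def D_def N_def .
qed

definition tkc :: "nat \<Rightarrow> 'v::real_normed_vector \<Rightarrow> ('n::finite \<Rightarrow> nat \<Rightarrow> 'v) \<Rightarrow> real" where
  "tkc m c z = (1 / real CARD('n)) * (\<Sum>i\<in>UNIV. (1 / real m) * (\<Sum>j=1..m. (norm (c - z i j))\<^sup>2))"

lemma tk_tkc: "tk m x z = tkc m (avg x) z" by (simp add: tk_def tkc_def)

definition Avg :: "nat \<Rightarrow> ('n::finite \<Rightarrow> nat \<Rightarrow> nat \<Rightarrow> real) \<Rightarrow> real" where
  "Avg m f = (1/real CARD('n)) * (\<Sum>i\<in>UNIV. (1/real m) * (\<Sum>j=1..m. (1/real m) * (\<Sum>a=1..m. f i j a)))"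

lemma Avg_add: "Avg m (\<lambda>i j a. f i j a + g i j a) = Avg m f + Avg m g"
  by (simp add: Avg_def sum.distrib distrib_left)

lemma Avg_cmult: "Avg m (\<lambda>i j a. c * f i j a) = c * Avg m f"
  by (simp add: Avg_def sum_distrib_left mult.left_commute)

lemma Avg_const: "m \<ge> 1 \<Longrightarrow> Avg m (\<lambda>i j a. c) = c"
  by (simp add: Avg_def)

lemma Avg_mono: "(\<And>i j a. j \<in> {1..m} \<Longrightarrow> a \<in> {1..m} \<Longrightarrow> f i j a \<le> g i j a) \<Longrightarrow> Avg m f \<le> Avg m g"
  unfolding Avg_def
  by (intro mult_left_mono sum_mono) auto

lemma Avg_sum: "finite T \<Longrightarrow> (\<Sum>t\<in>T. Avg m (f t)) = Avg m (\<lambda>i j a. \<Sum>t\<in>T. f t i j a)"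
  unfolding Avg_def by (simp add: sum_distrib_left sum.swap[of _ T])

lemma norm_diff_sq_le:
  fixes u v :: "'v::real_inner"
  assumes "\<eta> > 0"
  shows "(norm (u - v))\<^sup>2 \<le> (1 + \<eta>) * (norm u)\<^sup>2 + (1 + 1/\<eta>) * (norm v)\<^sup>2"
proof -
  have "0 \<le> (norm (\<eta> *\<^sub>R u - v))\<^sup>2" by simp
  also have "(norm (\<eta> *\<^sub>R u - v))\<^sup>2 = \<eta>\<^sup>2 * (norm u)\<^sup>2 - 2 * \<eta> * (u \<bullet> v) + (norm v)\<^sup>2"
    unfolding power2_norm_eq_inner by (simp add: inner_diff_left inner_diff_right inner_commute algebra_simps power2_eq_square)
  finally have h: "2 * \<eta> * (u \<bullet> v) \<le> \<eta>\<^sup>2 * (norm u)\<^sup>2 + (norm v)\<^sup>2" by simp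
  have e: "(norm (u - v))\<^sup>2 = (norm u)\<^sup>2 - 2 * (u \<bullet> v) + (norm v)\<^sup>2"
    unfolding power2_norm_eq_inner by (simp add: inner_diff_left inner_diff_right inner_commute algebra_simps)
  have "- 2 * (u \<bullet> v) \<le> \<eta> * (norm u)\<^sup>2 + (1/\<eta>) * (norm v)\<^sup>2"
  proof -
    have "- 2 * (u \<bullet> v) = (- 2 * \<eta> * (u \<bullet> v)) / \<eta>" using assms by simp
    also have "\<dots> \<le> (\<eta>\<^sup>2 * (norm u)\<^sup>2 + (norm v)\<^sup>2) / \<eta>"
    proof -
      have "- 2 * \<eta> * (u \<bullet> v) \<le> \<eta>\<^sup>2 * (norm u)\<^sup>2 + (norm v)\<^sup>2"
      proof -
        have "0 \<le> (norm (\<eta> *\<^sub>R u + v))\<^sup>2" by simp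
        also have "(norm (\<eta> *\<^sub>R u + v))\<^sup>2 = \<eta>\<^sup>2 * (norm u)\<^sup>2 + 2 * \<eta> * (u \<bullet> v) + (norm v)\<^sup>2"
          unfolding power2_norm_eq_inner by (simp add: inner_add_left inner_add_right inner_commute algebra_simps power2_eq_square)
        finally show ?thesis by simp
      qed
      then show ?thesis using assms by (intro divide_right_mono) auto
    qed
    also have "\<dots> = \<eta> * (norm u)\<^sup>2 + (1/\<eta>) * (norm v)\<^sup>2" using assms by (simp add: field_simps power2_eq_square)
    finally show ?thesis .
  qed
  then show ?thesis unfolding e by (simp add: algebra_simps)
qed

lemma sigma_step:
  fixes x :: "'n::finite \<Rightarrow> 'v::real_normed_vector" and z :: "'n \<Rightarrow> nat \<Rightarrow> 'v"
  assumes m: "m \<ge> 1"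
  shows "(\<Sum>\<sigma>\<in>PiE (UNIV::'n set) (\<lambda>_. {1..m}). tkc m c (\<lambda>i j. if j = \<sigma> i then x i else z i j))
       = real (card (PiE (UNIV::'n set) (\<lambda>_. {1..m::nat}))) * Avg m (\<lambda>i j a. (norm (c - (if j = a then x i else z i j)))\<^sup>2)"
proof -
  define T where "T = PiE (UNIV::'n set) (\<lambda>_. {1..m::nat})"
  define cT where "cT = real (card T)"
  define F where "F = (\<lambda>i j a. (norm (c - (if j = a then x i else z i j)))\<^sup>2)"
  have single: "(\<Sum>\<sigma>\<in>T. F i j (\<sigma> i)) = cT / real m * (\<Sum>a\<in>{1..m}. F i j a)" for i j
    using sum_T_single[OF m, of "F i j" i] unfolding T_def cT_def by simp
  have "(\<Sum>\<sigma>\<in>T. tkc m c (\<lambda>i j. if j = \<sigma> i then x i else z i j))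
      = (\<Sum>\<sigma>\<in>T. (1 / real CARD('n)) * (\<Sum>i\<in>UNIV. (1 / real m) * (\<Sum>j=1..m. F i j (\<sigma> i))))"
    unfolding tkc_def F_def by (intro sum.cong refl arg_cong[where f="\<lambda>x. _ * x"])
  also have "\<dots> = (1 / real CARD('n)) * (\<Sum>i\<in>UNIV. (1 / real m) * (\<Sum>j=1..m. \<Sum>\<sigma>\<in>T. F i j (\<sigma> i)))"
    by (simp add: sum_distrib_left sum.swap[of _ T])
  also have "\<dots> = (1 / real CARD('n)) * (\<Sum>i\<in>UNIV. (1 / real m) * (\<Sum>j=1..m. cT / real m * (\<Sum>a\<in>{1..m}. F i j a)))"
    by (simp only: single)
  also have "\<dots> = cT * Avg m F"
    unfolding Avg_def by (simp add: sum_distrib_left mult.left_commute)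
  finally show ?thesis unfolding T_def cT_def F_def .
qed

lemma DET:
  fixes grad :: "'n::finite \<Rightarrow> nat \<Rightarrow> 'v::euclidean_space \<Rightarrow> 'v" and x :: "'n \<Rightarrow> 'v" and z :: "'n \<Rightarrow> nat \<Rightarrow> 'v"
  assumes m: "m \<ge> 1"
    and smooth: "\<And>i j x y. j \<in> {1..m} \<Longrightarrow> norm (grad i j x - grad i j y) \<le> L * norm (x - y)"
    and aL: "\<alpha>\<^sup>2 * L\<^sup>2 \<le> real CARD('n) / (8 * real m)"
  shows "(\<Sum>\<tau>\<in>PiE (UNIV::'n set) (\<lambda>_. {1..m}). \<Sum>\<sigma>\<in>PiE (UNIV::'n set) (\<lambda>_. {1..m}).
            tkc m (avg x - \<alpha> *\<^sub>R avg (gt_g grad m x z \<tau>)) (\<lambda>i j. if j = \<sigma> i then x i else z i j))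
          / (real (card (PiE (UNIV::'n set) (\<lambda>_. {1..m::nat}))) * real (card (PiE (UNIV::'n set) (\<lambda>_. {1..m::nat}))))
     \<le> (1 - 1 / (4 * real m)) * tk m x z
        + 4 * real m * \<alpha>\<^sup>2 * (norm (avg_grad grad m x))\<^sup>2
        + 9 / (4 * real m * real CARD('n)) * consensus_err x"
proof -
  define T where "T = PiE (UNIV::'n set) (\<lambda>_. {1..m::nat})"
  define cT where "cT = real (card T)"
  define N where "N = real CARD('n)"
  define xb where "xb = avg x"
  define nab where "nab = (\<lambda>i. (1 / real m) *\<^sub>R (\<Sum>j=1..m. grad i j (x i)))"
  define \<mu> where "\<mu> = avg nab"
  define Y where "Y = (\<lambda>i a. grad i a (x i) - grad i a (z i a))"
  define G where "G = (\<lambda>i a. grad i a (x i) - grad i a (z i a) + (1 / real m) *\<^sub>R (\<Sum>j=1..m. grad i j (z i j)))"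
  define d where "d = (\<lambda>i a. G i a - nab i)"
  define w where "w = (\<lambda>i j a. if j = a then x i else z i j)"
  define V where "V = \<alpha>\<^sup>2 / N\<^sup>2 * (1 / real m) * (\<Sum>i\<in>UNIV. \<Sum>a\<in>{1..m}. (norm (d i a))\<^sup>2)"
  define cons where "cons = consensus_err x"
  define t where "t = tk m x z"
  have Npos: "N > 0" unfolding N_def by simp
  have mpos: "real m > 0" using m by simp
  have fT: "finite T" unfolding T_def by (intro finite_PiE) auto
  have cTpos: "cT > 0" unfolding cT_def T_def using m by (simp add: card_PiE)
  have \<mu>_eq: "\<mu> = avg_grad grad m x" unfolding \<mu>_def avg_grad_def nab_def ..
  have gbar: "avg (gt_g grad m x z \<tau>) = \<mu> + (1/N) *\<^sub>R (\<Sum>i\<in>UNIV. d i (\<tau> i))" for \<tau>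
  proof -
    have "gt_g grad m x z \<tau> = (\<lambda>i. nab i + d i (\<tau> i))"
      unfolding gt_g_def d_def G_def by auto
    then show ?thesis unfolding \<mu>_def avg_def N_def by (simp add: sum.distrib scaleR_add_right)
  qed
  have dY: "d i a = Y i a - (1 / real m) *\<^sub>R (\<Sum>b=1..m. Y i b)" for i a
    unfolding d_def G_def nab_def Y_def by (simp add: sum_subtractf scaleR_diff_right algebra_simps)
  have Z: "(\<Sum>a\<in>{1..m}. d i a) = 0" for i
  proof -
    have "(\<Sum>a\<in>{1..m}. d i a) = (\<Sum>b=1..m. Y i b) - real m *\<^sub>R ((1 / real m) *\<^sub>R (\<Sum>b=1..m. Y i b))"
      unfolding dY by (simp only: sum_subtractf sum_constant_scaleR card_atLeastAtMost) simp
    then show ?thesis using mpos by simp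
  qed
  have tau_step: "(\<Sum>\<tau>\<in>T. (norm (xb - \<alpha> *\<^sub>R avg (gt_g grad m x z \<tau>) - w i j a))\<^sup>2)
      = cT * ((norm (xb - \<alpha> *\<^sub>R \<mu> - w i j a))\<^sup>2 + V)" for i j a
  proof -
    have "(\<Sum>\<tau>\<in>T. (norm (xb - \<alpha> *\<^sub>R avg (gt_g grad m x z \<tau>) - w i j a))\<^sup>2)
        = (\<Sum>\<tau>\<in>T. (norm ((xb - \<alpha> *\<^sub>R \<mu> - w i j a) - \<alpha> *\<^sub>R ((1/N) *\<^sub>R (\<Sum>i\<in>UNIV. d i (\<tau> i)))))\<^sup>2)"
      unfolding gbar by (intro sum.cong refl) (simp add: algebra_simps scaleR_add_right)
    also have "\<dots> = cT * ((norm (xb - \<alpha> *\<^sub>R \<mu> - w i j a))\<^sup>2 + V)"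
      unfolding T_def cT_def N_def V_def by (rule var_identity[OF m Z])
    finally show ?thesis .
  qed
  have total: "(\<Sum>\<tau>\<in>T. \<Sum>\<sigma>\<in>T. tkc m (xb - \<alpha> *\<^sub>R avg (gt_g grad m x z \<tau>)) (\<lambda>i j. if j = \<sigma> i then x i else z i j))
      = cT * cT * (Avg m (\<lambda>i j a. (norm (xb - \<alpha> *\<^sub>R \<mu> - w i j a))\<^sup>2) + V)"
  proof -
    have "(\<Sum>\<tau>\<in>T. \<Sum>\<sigma>\<in>T. tkc m (xb - \<alpha> *\<^sub>R avg (gt_g grad m x z \<tau>)) (\<lambda>i j. if j = \<sigma> i then x i else z i j))
       = (\<Sum>\<tau>\<in>T. cT * Avg m (\<lambda>i j a. (norm (xb - \<alpha> *\<^sub>R avg (gt_g grad m x z \<tau>) - w i j a))\<^sup>2))"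
      unfolding T_def cT_def w_def by (intro sum.cong refl sigma_step[OF m])
    also have "\<dots> = cT * Avg m (\<lambda>i j a. \<Sum>\<tau>\<in>T. (norm (xb - \<alpha> *\<^sub>R avg (gt_g grad m x z \<tau>) - w i j a))\<^sup>2)"
      by (simp add: sum_distrib_left[symmetric] Avg_sum[OF fT])
    also have "\<dots> = cT * Avg m (\<lambda>i j a. cT * ((norm (xb - \<alpha> *\<^sub>R \<mu> - w i j a))\<^sup>2 + V))"
      unfolding tau_step ..
    also have "\<dots> = cT * cT * (Avg m (\<lambda>i j a. (norm (xb - \<alpha> *\<^sub>R \<mu> - w i j a))\<^sup>2) + V)"
      by (simp add: Avg_cmult Avg_add Avg_const[OF m])
    finally show ?thesis .
  qed
  define \<eta> where "\<eta> = 1 / (2 * real m)"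
  have eta: "\<eta> > 0" unfolding \<eta>_def using mpos by simp
  have A1: "Avg m (\<lambda>i j a. (norm (xb - \<alpha> *\<^sub>R \<mu> - w i j a))\<^sup>2)
      \<le> (1 + \<eta>) * Avg m (\<lambda>i j a. (norm (xb - w i j a))\<^sup>2) + (1 + 1/\<eta>) * (\<alpha>\<^sup>2 * (norm \<mu>)\<^sup>2)"
  proof -
    have "Avg m (\<lambda>i j a. (norm (xb - \<alpha> *\<^sub>R \<mu> - w i j a))\<^sup>2)
       \<le> Avg m (\<lambda>i j a. (1 + \<eta>) * (norm (xb - w i j a))\<^sup>2 + (1 + 1/\<eta>) * (\<alpha>\<^sup>2 * (norm \<mu>)\<^sup>2))"
    proof (rule Avg_mono)
      fix i j a
      have "(norm ((xb - w i j a) - \<alpha> *\<^sub>R \<mu>))\<^sup>2 \<le> (1 + \<eta>) * (norm (xb - w i j a))\<^sup>2 + (1 + 1/\<eta>) * (norm (\<alpha> *\<^sub>R \<mu>))\<^sup>2"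
        by (rule norm_diff_sq_le[OF eta])
      then show "(norm (xb - \<alpha> *\<^sub>R \<mu> - w i j a))\<^sup>2 \<le> (1 + \<eta>) * (norm (xb - w i j a))\<^sup>2 + (1 + 1/\<eta>) * (\<alpha>\<^sup>2 * (norm \<mu>)\<^sup>2)"
        by (simp add: algebra_simps power_mult_distrib)
    qed
    also have "\<dots> = (1 + \<eta>) * Avg m (\<lambda>i j a. (norm (xb - w i j a))\<^sup>2) + (1 + 1/\<eta>) * (\<alpha>\<^sup>2 * (norm \<mu>)\<^sup>2)"
      by (simp add: Avg_cmult Avg_add Avg_const[OF m])
    finally show ?thesis .
  qed
  have A2: "Avg m (\<lambda>i j a. (norm (xb - w i j a))\<^sup>2) = cons / (real m * N) + (1 - 1 / real m) * t"
  proof -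
    have inner: "(\<Sum>a=1..m. (norm (xb - w i j a))\<^sup>2) = (norm (xb - x i))\<^sup>2 + (real m - 1) * (norm (xb - z i j))\<^sup>2"
      if j: "j \<in> {1..m}" for i j
    proof -
      have "(\<Sum>a=1..m. (norm (xb - w i j a))\<^sup>2) = (norm (xb - w i j j))\<^sup>2 + (\<Sum>a\<in>{1..m}-{j}. (norm (xb - w i j a))\<^sup>2)"
        using j by (simp add: sum.remove)
      also have "(\<Sum>a\<in>{1..m}-{j}. (norm (xb - w i j a))\<^sup>2) = (\<Sum>a\<in>{1..m}-{j}. (norm (xb - z i j))\<^sup>2)"
        unfolding w_def by (intro sum.cong) auto
      also have "\<dots> = (real m - 1) * (norm (xb - z i j))\<^sup>2"
        using j m by (simp add: of_nat_diff)
      finally show ?thesis unfolding w_def by simp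
    qed
    have per_i: "(1/real m) * (\<Sum>j=1..m. (1/real m) * (A + (real m - 1) * B j))
        = (1/real m) * A + (1 - 1/real m) * ((1/real m) * (\<Sum>j=1..m. B j))" for A :: real and B
    proof -
      have "(\<Sum>j=1..m. (1/real m) * (A + (real m - 1) * B j)) = (1/real m) * (real m * A + (real m - 1) * (\<Sum>j=1..m. B j))"
        by (simp only: sum_distrib_left[symmetric] sum.distrib sum_constant card_atLeastAtMost) simp
      then show ?thesis using mpos by (simp add: field_simps)
    qed
    have "Avg m (\<lambda>i j a. (norm (xb - w i j a))\<^sup>2)
        = (1/N) * (\<Sum>i\<in>UNIV. (1/real m) * (\<Sum>j=1..m. (1/real m) * ((norm (xb - x i))\<^sup>2 + (real m - 1) * (norm (xb - z i j))\<^sup>2)))"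
      unfolding Avg_def N_def by (intro arg_cong[where f="\<lambda>x. _ * x"] sum.cong refl) (use inner in auto)
    also have "\<dots> = (1/N) * (\<Sum>i\<in>UNIV. (1/real m) * (norm (xb - x i))\<^sup>2 + (1 - 1/real m) * ((1/real m) * (\<Sum>j=1..m. (norm (xb - z i j))\<^sup>2)))"
      by (intro arg_cong[where f="\<lambda>x. _ * x"] sum.cong refl per_i)
    also have "\<dots> = (1/N) * ((1/real m) * (\<Sum>i\<in>UNIV. (norm (xb - x i))\<^sup>2) + (1 - 1/real m) * (\<Sum>i\<in>UNIV. (1/real m) * (\<Sum>j=1..m. (norm (xb - z i j))\<^sup>2)))"
      by (simp only: sum.distrib sum_distrib_left[symmetric])
    also have "\<dots> = cons / (real m * N) + (1 - 1 / real m) * t"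
    proof -
      have c: "cons = (\<Sum>i\<in>UNIV. (norm (xb - x i))\<^sup>2)"
        unfolding cons_def consensus_err_def xb_def by (simp add: norm_minus_commute)
      have tt: "t = (1/N) * (\<Sum>i\<in>UNIV. (1/real m) * (\<Sum>j=1..m. (norm (xb - z i j))\<^sup>2))"
        unfolding t_def tk_def N_def xb_def ..
      show ?thesis unfolding c tt using Npos mpos by (simp add: field_simps)
    qed
    finally show ?thesis .
  qed
  have Vb: "V \<le> 2 * \<alpha>\<^sup>2 * L\<^sup>2 / N\<^sup>2 * (cons + N * t)"
  proof -
    have dY_le: "(\<Sum>a\<in>{1..m}. (norm (d i a))\<^sup>2) \<le> (\<Sum>a\<in>{1..m}. (norm (Y i a))\<^sup>2)" for i
    proof -
      define Yb where "Yb = (1 / real m) *\<^sub>R (\<Sum>b=1..m. Y i b)"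
      have sY: "(\<Sum>a=1..m. Y i a) = real m *\<^sub>R Yb" unfolding Yb_def using mpos by simp
      have "(\<Sum>a\<in>{1..m}. (norm (d i a))\<^sup>2) = (\<Sum>a\<in>{1..m}. (norm (Y i a))\<^sup>2 - 2 * (Y i a \<bullet> Yb) + (norm Yb)\<^sup>2)"
        unfolding dY Yb_def[symmetric] power2_norm_eq_inner
        by (intro sum.cong refl) (simp add: inner_diff_left inner_diff_right inner_commute)
      also have "\<dots> = (\<Sum>a\<in>{1..m}. (norm (Y i a))\<^sup>2) - 2 * ((\<Sum>a=1..m. Y i a) \<bullet> Yb) + real m * (norm Yb)\<^sup>2"
        by (simp add: sum.distrib sum_subtractf inner_sum_left sum_distrib_left)
      also have "\<dots> = (\<Sum>a\<in>{1..m}. (norm (Y i a))\<^sup>2) - real m * (norm Yb)\<^sup>2"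
        unfolding sY by (simp add: power2_norm_eq_inner)
      also have "\<dots> \<le> (\<Sum>a\<in>{1..m}. (norm (Y i a))\<^sup>2)" using mpos by simp
      finally show ?thesis .
    qed
    have Y_le: "(norm (Y i a))\<^sup>2 \<le> L\<^sup>2 * (2 * (norm (xb - x i))\<^sup>2 + 2 * (norm (xb - z i a))\<^sup>2)"
      if a: "a \<in> {1..m}" for i a
    proof -
      have "(norm (Y i a))\<^sup>2 \<le> (L * norm (x i - z i a))\<^sup>2"
        unfolding Y_def by (rule power_mono[OF smooth[OF a]]) simp
      also have "\<dots> = L\<^sup>2 * (norm ((xb - z i a) - (xb - x i)))\<^sup>2"
        by (simp add: power_mult_distrib algebra_simps)
      also have "\<dots> \<le> L\<^sup>2 * (2 * (norm (xb - x i))\<^sup>2 + 2 * (norm (xb - z i a))\<^sup>2)"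
      proof (rule mult_left_mono)
        have "(norm ((xb - z i a) - (xb - x i)))\<^sup>2 \<le> (1 + 1) * (norm (xb - z i a))\<^sup>2 + (1 + 1/1) * (norm (xb - x i))\<^sup>2"
          by (rule norm_diff_sq_le) simp
        then show "(norm ((xb - z i a) - (xb - x i)))\<^sup>2 \<le> 2 * (norm (xb - x i))\<^sup>2 + 2 * (norm (xb - z i a))\<^sup>2" by simp
      qed simp
      finally show ?thesis .
    qed
    have "(\<Sum>i\<in>UNIV. \<Sum>a\<in>{1..m}. (norm (d i a))\<^sup>2)
        \<le> (\<Sum>i\<in>UNIV. \<Sum>a\<in>{1..m}. L\<^sup>2 * (2 * (norm (xb - x i))\<^sup>2 + 2 * (norm (xb - z i a))\<^sup>2))"
      by (intro sum_mono order.trans[OF dY_le]) (auto intro: Y_le)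
    also have "\<dots> = 2 * L\<^sup>2 * real m * (cons + N * t)"
      unfolding cons_def t_def consensus_err_def tk_def N_def xb_def using mpos
      by (simp add: sum.distrib sum_distrib_left[symmetric] distrib_left field_simps norm_minus_commute sum_divide_distrib[symmetric])
    finally have S: "(\<Sum>i\<in>UNIV. \<Sum>a\<in>{1..m}. (norm (d i a))\<^sup>2) \<le> 2 * L\<^sup>2 * real m * (cons + N * t)" .
    have "V = \<alpha>\<^sup>2 / N\<^sup>2 * (1 / real m) * (\<Sum>i\<in>UNIV. \<Sum>a\<in>{1..m}. (norm (d i a))\<^sup>2)" by (rule V_def)
    also have "\<dots> \<le> \<alpha>\<^sup>2 / N\<^sup>2 * (1 / real m) * (2 * L\<^sup>2 * real m * (cons + N * t))"
      by (rule mult_left_mono[OF S]) simp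
    also have "\<dots> = 2 * \<alpha>\<^sup>2 * L\<^sup>2 / N\<^sup>2 * (cons + N * t)" using mpos by simp
    finally show ?thesis .
  qed
  have cons_nn: "cons \<ge> 0" unfolding cons_def consensus_err_def by (simp add: sum_nonneg)
  have t_nn: "t \<ge> 0" unfolding t_def tk_def by (simp add: sum_nonneg)
  have Vb2: "V \<le> cons / (4 * real m * N) + t / (4 * real m)"
  proof -
    have "2 * \<alpha>\<^sup>2 * L\<^sup>2 / N\<^sup>2 * (cons + N * t) \<le> 2 * (N / (8 * real m)) / N\<^sup>2 * (cons + N * t)"
      using aL cons_nn t_nn Npos
      by (intro mult_right_mono divide_right_mono) (auto simp: mult.assoc N_def field_simps)
    also have "\<dots> = cons / (4 * real m * N) + t / (4 * real m)"
      using Npos mpos by (simp add: field_simps power2_eq_square)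
    finally show ?thesis using Vb by simp
  qed
  have LHS: "(\<Sum>\<tau>\<in>T. \<Sum>\<sigma>\<in>T. tkc m (xb - \<alpha> *\<^sub>R avg (gt_g grad m x z \<tau>)) (\<lambda>i j. if j = \<sigma> i then x i else z i j)) / (cT * cT)
     = Avg m (\<lambda>i j a. (norm (xb - \<alpha> *\<^sub>R \<mu> - w i j a))\<^sup>2) + V"
    unfolding total using cTpos by simp
  define q where "q = \<alpha>\<^sup>2 * (norm \<mu>)\<^sup>2"
  have q_nn: "q \<ge> 0" unfolding q_def by simp
  have "Avg m (\<lambda>i j a. (norm (xb - \<alpha> *\<^sub>R \<mu> - w i j a))\<^sup>2) + V
      \<le> (1 + \<eta>) * (cons / (real m * N) + (1 - 1 / real m) * t) + (1 + 1/\<eta>) * q + (cons / (4 * real m * N) + t / (4 * real m))"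
    using A1 Vb2 unfolding q_def A2 by linarith
  also have "\<dots> = ((1 + \<eta>) / (real m * N) + 1 / (4 * real m * N)) * cons
        + ((1 + \<eta>) * (1 - 1 / real m) + 1 / (4 * real m)) * t + (1 + 1/\<eta>) * q"
    by (simp add: field_simps)
  also have "\<dots> \<le> 9 / (4 * real m * N) * cons + (1 - 1 / (4 * real m)) * t + 4 * real m * q"
  proof -
    have c1: "(1 + \<eta>) / (real m * N) + 1 / (4 * real m * N) \<le> 9 / (4 * real m * N)"
      unfolding \<eta>_def using mpos Npos m by (simp add: field_simps)
    have c2: "(1 + \<eta>) * (1 - 1 / real m) + 1 / (4 * real m) \<le> 1 - 1 / (4 * real m)"
      unfolding \<eta>_def using mpos m by (simp add: field_simps)
    have c3: "1 + 1/\<eta> \<le> 4 * real m"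
      unfolding \<eta>_def using mpos m by (simp add: field_simps)
    show ?thesis
      using mult_right_mono[OF c1 cons_nn] mult_right_mono[OF c2 t_nn] mult_right_mono[OF c3 q_nn] by linarith
  qed
  finally have fin: "(\<Sum>\<tau>\<in>T. \<Sum>\<sigma>\<in>T. tkc m (xb - \<alpha> *\<^sub>R avg (gt_g grad m x z \<tau>)) (\<lambda>i j. if j = \<sigma> i then x i else z i j)) / (cT * cT)
      \<le> 9 / (4 * real m * N) * cons + (1 - 1 / (4 * real m)) * t + 4 * real m * q"
    unfolding LHS .
  show ?thesis using fin unfolding T_def[symmetric] cT_def[symmetric] xb_def[symmetric] q_def \<mu>_eq N_def cons_def t_def
    by (simp add: algebra_simps)
qed

lemma gt_saga_dep:
  assumes "\<And>t. t < k \<Longrightarrow> tau t = tau' t \<and> s t = s' t"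
  shows "gt_saga W grad m \<alpha> x0 tau s k = gt_saga W grad m \<alpha> x0 tau' s' k"
  using assms
proof (induction k)
  case (Suc k)
  have "gt_saga W grad m \<alpha> x0 tau s k = gt_saga W grad m \<alpha> x0 tau' s' k" using Suc by auto
  moreover have "tau k = tau' k" "s k = s' k" using Suc.prems by auto
  ultimately show ?case by (simp only: gt_saga.simps)
qed simp

lemma avg_mix:
  fixes W :: "real^'n::finite^'n" and v :: "'n \<Rightarrow> 'v::real_vector"
  assumes col: "\<And>r. (\<Sum>i\<in>UNIV. W $ i $ r) = 1"
  shows "avg (\<lambda>i. \<Sum>r\<in>UNIV. W $ i $ r *\<^sub>R v r) = avg v"
proof -
  have "(\<Sum>i\<in>UNIV. \<Sum>r\<in>UNIV. W $ i $ r *\<^sub>R v r) = (\<Sum>r\<in>UNIV. (\<Sum>i\<in>UNIV. W $ i $ r) *\<^sub>R v r)"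
    by (subst sum.swap) (simp add: scaleR_sum_left)
  also have "\<dots> = (\<Sum>r\<in>UNIV. v r)" using col by simp
  finally show ?thesis unfolding avg_def by simp
qed

lemma avg_diff: "avg (\<lambda>i. u i - v i) = avg u - avg (v :: 'n::finite \<Rightarrow> 'v::real_vector)"
  unfolding avg_def by (simp add: sum_subtractf scaleR_diff_right)

lemma avg_add: "avg (\<lambda>i. u i + v i) = avg u + avg (v :: 'n::finite \<Rightarrow> 'v::real_vector)"
  unfolding avg_def by (simp add: sum.distrib scaleR_add_right)

lemma avg_scale: "avg (\<lambda>i. c *\<^sub>R v i) = c *\<^sub>R avg (v :: 'n::finite \<Rightarrow> 'v::real_vector)"
  unfolding avg_def by (simp add: scaleR_sum_right)

lemma gt_saga_inv:
  fixes W :: "real^'n::finite^'n"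
  assumes col: "\<And>r. (\<Sum>i\<in>UNIV. W $ i $ r) = 1"
  shows "avg (fst (snd (gt_saga W grad m \<alpha> x0 tau s k))) = avg (snd (snd (snd (gt_saga W grad m \<alpha> x0 tau s k))))"
proof (induction k)
  case 0
  then show ?case by (simp add: avg_def)
next
  case (Suc k)
  obtain x y z gp where st: "gt_saga W grad m \<alpha> x0 tau s k = (x, y, z, gp)" by (cases "gt_saga W grad m \<alpha> x0 tau s k") auto
  have IH: "avg y = avg gp" using Suc st by simp
  show ?case using IH
    by (simp add: st Let_def avg_mix[OF col] avg_diff avg_add)
qed

lemma gt_saga_step:
  fixes W :: "real^'n::finite^'n" and grad :: "'n \<Rightarrow> nat \<Rightarrow> 'v \<Rightarrow> 'v::euclidean_space"
  assumes col: "\<And>r. (\<Sum>i\<in>UNIV. W $ i $ r) = 1"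
  shows "tk m (gt_x W grad m \<alpha> x0 tau s (Suc k)) (gt_z W grad m \<alpha> x0 tau s (Suc k))
    = tkc m (avg (gt_x W grad m \<alpha> x0 tau s k) - \<alpha> *\<^sub>R avg (gt_g grad m (gt_x W grad m \<alpha> x0 tau s k) (gt_z W grad m \<alpha> x0 tau s k) (tau k)))
         (\<lambda>i j. if j = s k i then gt_x W grad m \<alpha> x0 tau s k i else gt_z W grad m \<alpha> x0 tau s k i j)"
proof -
  obtain x y z gp where st: "gt_saga W grad m \<alpha> x0 tau s k = (x, y, z, gp)" by (cases "gt_saga W grad m \<alpha> x0 tau s k") auto
  have IH: "avg y = avg gp" using gt_saga_inv[OF col, of grad m \<alpha> x0 tau s k] st by simp
  define g where "g = gt_g grad m x z (tau k)"
  define y' where "y' = (\<lambda>i. \<Sum>r\<in>UNIV. W $ i $ r *\<^sub>R (y r + g r - gp r))"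
  have y': "avg y' = avg g" unfolding y'_def avg_mix[OF col] using IH by (simp add: avg_diff avg_add)
  have "avg (\<lambda>i. \<Sum>r\<in>UNIV. W $ i $ r *\<^sub>R (x r - \<alpha> *\<^sub>R y' r)) = avg x - \<alpha> *\<^sub>R avg g"
    unfolding avg_mix[OF col] avg_diff avg_scale y' ..
  then show ?thesis
    unfolding tk_tkc gt_x_def gt_z_def gt_saga.simps st unfolding fst_conv snd_conv by (simp add: Let_def g_def y'_def)
qed

lemma restrict_eq_iff: "v \<in> extensional I \<Longrightarrow> (restrict f I = v) \<longleftrightarrow> (\<forall>j\<in>I. f j = v j)"
  by (auto simp: fun_eq_iff restrict_def extensional_def)

lemma restrict_event:
  fixes val :: "'j \<Rightarrow> 'a \<Rightarrow> nat"
  assumes I: "finite I" and ev: "\<And>j a. j \<in> I \<Longrightarrow> {\<omega>\<in>space N. val j \<omega> = a} \<in> sets N"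
    and v: "v \<in> extensional I"
  shows "{\<omega>\<in>space N. restrict (\<lambda>j. val j \<omega>) I = v} \<in> sets N"
proof -
  have "{\<omega>\<in>space N. restrict (\<lambda>j. val j \<omega>) I = v} = {\<omega>\<in>space N. \<forall>j\<in>I. val j \<omega> = v j}"
    using restrict_eq_iff[OF v] by auto
  also have "\<dots> \<in> sets N" using ev I by (intro sets.sets_Collect_finite_All) auto
  finally show ?thesis .
qed

lemma meas_restrict:
  fixes val :: "'j \<Rightarrow> 'a \<Rightarrow> nat" and G :: "('j \<Rightarrow> nat) \<Rightarrow> real"
  assumes I: "finite I" and ev: "\<And>j a. j \<in> I \<Longrightarrow> {\<omega>\<in>space N. val j \<omega> = a} \<in> sets N"
  shows "(\<lambda>\<omega>. G (restrict (\<lambda>j. val j \<omega>) I)) \<in> borel_measurable N"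
proof -
  have cnt: "countable (PiE I (\<lambda>_. UNIV :: nat set))" by (rule countable_PiE[OF I]) simp
  have R: "(\<lambda>\<omega>. restrict (\<lambda>j. val j \<omega>) I) \<in> measurable N (count_space (PiE I (\<lambda>_. UNIV)))"
    unfolding measurable_count_space_eq_countable[OF cnt]
  proof safe
    fix a assume a: "a \<in> PiE I (\<lambda>_. UNIV :: nat set)"
    have "(\<lambda>\<omega>. restrict (\<lambda>j. val j \<omega>) I) -` {a} \<inter> space N = {\<omega>\<in>space N. restrict (\<lambda>j. val j \<omega>) I = a}"
      by auto
    also have "\<dots> \<in> sets N" using a by (intro restrict_event[OF I ev]) (auto simp: PiE_def)
    finally show "(\<lambda>\<omega>. restrict (\<lambda>j. val j \<omega>) I) -` {a} \<inter> space N \<in> sets N" .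
  qed auto
  show ?thesis by (rule measurable_compose[OF R]) simp
qed

lemma integral_restrict:
  fixes val :: "'j \<Rightarrow> 'a \<Rightarrow> nat" and G :: "('j \<Rightarrow> nat) \<Rightarrow> real"
  assumes P: "prob_space M"
    and meas: "\<And>j. val j \<in> measurable M (count_space UNIV)"
    and unif: "\<And>j. distr M (count_space UNIV) (val j) = measure_pmf (pmf_of_set {1..m})"
    and ind: "prob_space.indep_vars M (\<lambda>_. count_space UNIV) val UNIV"
    and I: "finite I" "I \<noteq> {}" and m: "m \<ge> 1"
  shows "integrable M (\<lambda>\<omega>. G (restrict (\<lambda>j. val j \<omega>) I))"
    "(\<integral>\<omega>. G (restrict (\<lambda>j. val j \<omega>) I) \<partial>M) = (\<Sum>v\<in>PiE I (\<lambda>_. {1..m}). G v) / real (card (PiE I (\<lambda>_. {1..m})))"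
proof -
  interpret prob_space M by (rule P)
  define R where "R = (\<lambda>\<omega>. restrict (\<lambda>j. val j \<omega>) I)"
  define D where "D = PiE I (\<lambda>_. {1..m})"
  have fD: "finite D" unfolding D_def using I by (intro finite_PiE) auto
  have cardD: "card D = m ^ card I" unfolding D_def using I by (simp add: card_PiE)
  have ev: "{\<omega>\<in>space M. val j \<omega> = a} \<in> sets M" for j a
  proof -
    have "val j -` {a} \<inter> space M \<in> sets M" by (rule measurable_sets[OF meas]) simp
    moreover have "val j -` {a} \<inter> space M = {\<omega>\<in>space M. val j \<omega> = a}" by auto
    ultimately show ?thesis by simp
  qed
  have Gm: "(\<lambda>\<omega>. G (R \<omega>)) \<in> borel_measurable M" unfolding R_def by (rule meas_restrict[OF I(1) ev])
  have Rv: "{\<omega>\<in>space M. R \<omega> = v} \<in> sets M" if "v \<in> D" for v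
    unfolding R_def using that by (intro restrict_event[OF I(1) ev]) (auto simp: D_def PiE_def)
  have pr1: "measure M (val j -` {a} \<inter> space M) = 1 / real m" if "a \<in> {1..m}" for j a
  proof -
    have "measure M (val j -` {a} \<inter> space M) = measure (distr M (count_space UNIV) (val j)) {a}"
      by (rule measure_distr[OF meas, symmetric]) simp
    also have "\<dots> = 1 / real m" using that m unfolding unif by (simp add: measure_pmf_single)
    finally show ?thesis .
  qed
  have AEj: "AE \<omega> in M. val j \<omega> \<in> {1..m}" for j
  proof -
    have "AE x in measure_pmf (pmf_of_set {1..m}). x \<in> {1..m}" using m by (simp add: AE_measure_pmf_iff)
    then have "AE x in distr M (count_space UNIV) (val j). x \<in> {1..m}" unfolding unif .
    then show ?thesis by (subst (asm) AE_distr_iff[OF meas]) auto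
  qed
  have AE: "AE \<omega> in M. R \<omega> \<in> D"
  proof -
    have "AE \<omega> in M. \<forall>j\<in>I. val j \<omega> \<in> {1..m}" using AEj I by (intro eventually_ball_finite) auto
    then show ?thesis by eventually_elim (auto simp: R_def D_def)
  qed
  define S where "S = (\<lambda>\<omega>. \<Sum>v\<in>D. G v * indicator {\<omega>\<in>space M. R \<omega> = v} \<omega>)"
  have Sm: "S \<in> borel_measurable M" unfolding S_def using Rv by (intro borel_measurable_sum borel_measurable_times borel_measurable_indicator) auto
  have Sint: "integrable M S" unfolding S_def using Rv
    by (intro Bochner_Integration.integrable_sum integrable_mult_right integrable_real_indicator) (auto simp: less_top[symmetric])
  have AES: "AE \<omega> in M. G (R \<omega>) = S \<omega>"
    using AE AE_space
  proof eventually_elim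
    case (elim \<omega>)
    have True: "\<omega> \<in> space M" using elim by simp
      have "S \<omega> = (\<Sum>v\<in>D. if R \<omega> = v then G v else 0)"
        unfolding S_def using True by (intro sum.cong) (auto simp: indicator_def)
      also have "\<dots> = G (R \<omega>)" using elim fD by simp
      finally show ?case by simp
  qed
  show int: "integrable M (\<lambda>\<omega>. G (restrict (\<lambda>j. val j \<omega>) I))"
    using integrable_cong_AE[OF Gm Sm AES] Sint unfolding R_def by simp
  have prv: "measure M {\<omega>\<in>space M. R \<omega> = v} = 1 / real (card D)" if v: "v \<in> D" for v
  proof -
    have "{\<omega>\<in>space M. R \<omega> = v} = (\<Inter>j\<in>I. val j -` {v j} \<inter> space M)"
      using restrict_eq_iff[of v I] v I(2) unfolding R_def D_def by (auto simp: PiE_def)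
    then have "measure M {\<omega>\<in>space M. R \<omega> = v} = (\<Prod>j\<in>I. measure M (val j -` {v j} \<inter> space M))"
      using indep_varsD[OF ind, of I "\<lambda>j. {v j}"] I by simp
    also have "\<dots> = (\<Prod>j\<in>I. 1 / real m)"
      using v unfolding D_def by (intro prod.cong refl pr1) (auto simp: PiE_def)
    also have "\<dots> = 1 / real (card D)" unfolding cardD by (simp add: power_one_over)
    finally show ?thesis .
  qed
  have "(\<integral>\<omega>. G (R \<omega>) \<partial>M) = (\<integral>\<omega>. S \<omega> \<partial>M)" by (rule integral_cong_AE[OF Gm Sm AES])
  also have "\<dots> = (\<Sum>v\<in>D. G v * measure M {\<omega>\<in>space M. R \<omega> = v})"
    unfolding S_def using Rv
    by (subst Bochner_Integration.integral_sum) (auto simp: less_top[symmetric] Int_absorb2 sets.sets_into_space)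
  also have "\<dots> = (\<Sum>v\<in>D. G v) / real (card D)"
    by (simp add: prv sum_divide_distrib)
  finally show "(\<integral>\<omega>. G (restrict (\<lambda>j. val j \<omega>) I) \<partial>M) = (\<Sum>v\<in>PiE I (\<lambda>_. {1..m}). G v) / real (card (PiE I (\<lambda>_. {1..m})))"
    unfolding R_def D_def .
qed

definition Iall :: "nat \<Rightarrow> (bool \<times> nat \<times> 'n::finite) set" where
  "Iall k = (UNIV::bool set) \<times> {..k} \<times> (UNIV::'n set)"
definition Ilt :: "nat \<Rightarrow> (bool \<times> nat \<times> 'n::finite) set" where
  "Ilt k = (UNIV::bool set) \<times> {..<k} \<times> (UNIV::'n set)"
definition mrg :: "nat \<Rightarrow> (bool \<times> nat \<times> 'n::finite \<Rightarrow> nat) \<Rightarrow> ('n \<Rightarrow> nat) \<Rightarrow> ('n \<Rightarrow> nat) \<Rightarrow> bool \<times> nat \<times> 'n \<Rightarrow> nat" where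
  "mrg k h \<tau> \<sigma> = (\<lambda>j. if fst (snd j) < k then h j else if fst (snd j) = k then (if fst j then \<tau> (snd (snd j)) else \<sigma> (snd (snd j))) else undefined)"

lemma mem_Iall: "j \<in> Iall k \<longleftrightarrow> fst (snd j) \<le> k" by (cases j) (auto simp: Iall_def)
lemma mem_Ilt: "j \<in> Ilt k \<longleftrightarrow> fst (snd j) < k" by (cases j) (auto simp: Ilt_def)
lemma finite_Iall: "finite (Iall k)" by (simp add: Iall_def)
lemma finite_Ilt: "finite (Ilt k)" by (simp add: Ilt_def)
lemma Iall_ne: "Iall k \<noteq> {}" by (auto simp: Iall_def)

lemma restrict_mrg: "h \<in> extensional (Ilt k) \<Longrightarrow> restrict (mrg k h \<tau> \<sigma>) (Ilt k) = h"
  by (auto simp: fun_eq_iff restrict_def extensional_def mrg_def mem_Ilt)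

lemma merge_bij:
  "bij_betw (\<lambda>(h,\<tau>,\<sigma>). mrg k h \<tau> \<sigma>) (PiE (Ilt k) (\<lambda>_. A) \<times> PiE (UNIV::'n::finite set) (\<lambda>_. A) \<times> PiE (UNIV::'n set) (\<lambda>_. A))
     (PiE (Iall k) (\<lambda>_. A))"
proof (rule bij_betw_byWitness[where f'="\<lambda>v. (restrict v (Ilt k), (\<lambda>i. v (True, k, i)), (\<lambda>i. v (False, k, i)))"])
  show "\<forall>a\<in>PiE (Ilt k) (\<lambda>_. A) \<times> PiE (UNIV::'n set) (\<lambda>_. A) \<times> PiE (UNIV::'n set) (\<lambda>_. A).
      (\<lambda>v::bool \<times> nat \<times> 'n \<Rightarrow> nat. (restrict v (Ilt k), (\<lambda>i. v (True, k, i)), (\<lambda>i. v (False, k, i)))) ((\<lambda>(h,\<tau>,\<sigma>). mrg k h \<tau> \<sigma>) a) = a"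
    by (auto simp: restrict_mrg PiE_def) (auto simp: mrg_def)
  show "\<forall>a'\<in>PiE (Iall k) (\<lambda>_. A). (\<lambda>(h,\<tau>,\<sigma>). mrg k h \<tau> \<sigma>) ((\<lambda>v::bool \<times> nat \<times> 'n \<Rightarrow> nat. (restrict v (Ilt k), (\<lambda>i. v (True, k, i)), (\<lambda>i. v (False, k, i)))) a') = a'"
  proof
    fix v :: "bool \<times> nat \<times> 'n \<Rightarrow> nat" assume v: "v \<in> PiE (Iall k) (\<lambda>_. A)"
    show "(\<lambda>(h,\<tau>,\<sigma>). mrg k h \<tau> \<sigma>) ((\<lambda>v::bool \<times> nat \<times> 'n \<Rightarrow> nat. (restrict v (Ilt k), (\<lambda>i. v (True, k, i)), (\<lambda>i. v (False, k, i)))) v) = v"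
    proof (rule ext)
      fix j :: "bool \<times> nat \<times> 'n"
      obtain b t i where j: "j = (b, t, i)" by (cases j) auto
      show "(\<lambda>(h,\<tau>,\<sigma>). mrg k h \<tau> \<sigma>) ((\<lambda>v::bool \<times> nat \<times> 'n \<Rightarrow> nat. (restrict v (Ilt k), (\<lambda>i. v (True, k, i)), (\<lambda>i. v (False, k, i)))) v) j = v j"
        using v unfolding j by (auto simp: mrg_def mem_Ilt PiE_def extensional_def mem_Iall)
    qed
  qed
  show "(\<lambda>(h,\<tau>,\<sigma>). mrg k h \<tau> \<sigma>) ` (PiE (Ilt k) (\<lambda>_. A) \<times> PiE (UNIV::'n set) (\<lambda>_. A) \<times> PiE (UNIV::'n set) (\<lambda>_. A)) \<subseteq> PiE (Iall k) (\<lambda>_. A)"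
    by (auto simp: mrg_def PiE_def extensional_def mem_Ilt mem_Iall Pi_def)
  show "(\<lambda>v::bool \<times> nat \<times> 'n \<Rightarrow> nat. (restrict v (Ilt k), (\<lambda>i. v (True, k, i)), (\<lambda>i. v (False, k, i)))) ` PiE (Iall k) (\<lambda>_. A) \<subseteq> PiE (Ilt k) (\<lambda>_. A) \<times> PiE (UNIV::'n set) (\<lambda>_. A) \<times> PiE (UNIV::'n set) (\<lambda>_. A)"
    by (auto simp: PiE_def extensional_def mem_Ilt mem_Iall Pi_def)
qed

lemma sum_merge:
  fixes G :: "(bool \<times> nat \<times> 'n::finite \<Rightarrow> nat) \<Rightarrow> real"
  assumes fA: "finite A"
  shows "(\<Sum>v\<in>PiE (Iall k) (\<lambda>_. A). G v)
    = (\<Sum>h\<in>PiE (Ilt k) (\<lambda>_. A). \<Sum>\<tau>\<in>PiE (UNIV::'n set) (\<lambda>_. A). \<Sum>\<sigma>\<in>PiE (UNIV::'n set) (\<lambda>_. A). G (mrg k h \<tau> \<sigma>))"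
proof -
  have "(\<Sum>v\<in>PiE (Iall k) (\<lambda>_. A). G v)
      = (\<Sum>p\<in>PiE (Ilt k) (\<lambda>_. A) \<times> PiE (UNIV::'n set) (\<lambda>_. A) \<times> PiE (UNIV::'n set) (\<lambda>_. A). G ((\<lambda>(h,\<tau>,\<sigma>). mrg k h \<tau> \<sigma>) p))"
    by (rule sum.reindex_bij_betw[OF merge_bij, symmetric])
  also have "\<dots> = (\<Sum>h\<in>PiE (Ilt k) (\<lambda>_. A). \<Sum>\<tau>\<in>PiE (UNIV::'n set) (\<lambda>_. A). \<Sum>\<sigma>\<in>PiE (UNIV::'n set) (\<lambda>_. A). G (mrg k h \<tau> \<sigma>))"
  proof -
    have cp: "\<And>(f :: _ \<Rightarrow> real) A B. (\<Sum>p\<in>A \<times> B. f p) = (\<Sum>a\<in>A. \<Sum>b\<in>B. f (a, b))"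
      by (simp add: sum.cartesian_product)
    show ?thesis by (simp only: cp split_conv)
  qed
  finally show ?thesis .
qed

theorem corollary1:
  fixes f :: "'n::finite \<Rightarrow> nat \<Rightarrow> 'v::euclidean_space \<Rightarrow> real" and grad :: "'n \<Rightarrow> nat \<Rightarrow> 'v \<Rightarrow> 'v"
    and L \<alpha> :: real and m :: nat and W :: "real^'n^'n" and x0 :: 'v
    and M :: "'a measure" and tau s :: "nat \<Rightarrow> 'n \<Rightarrow> 'a \<Rightarrow> nat" and k :: nat
  assumes m: "m \<ge> 1"
    and L: "L > 0"
    and deriv: "\<And>i j x. j \<in> {1..m} \<Longrightarrow> (f i j has_derivative (\<lambda>h. grad i j x \<bullet> h)) (at x)"
    and smooth: "\<And>i j x y. j \<in> {1..m} \<Longrightarrow> norm (grad i j x - grad i j y) \<le> L * norm (x - y)"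
    and bdd: "bdd_below (range (\<lambda>x. (1 / real CARD('n)) * (\<Sum>i\<in>UNIV. (1 / real m) * (\<Sum>j=1..m. f i j x))))"
    and W: "nonneg_primitive_doubly_stochastic W"
    and P: "prob_space M"
    and tau_rv: "\<And>t i. tau t i \<in> measurable M (count_space UNIV)"
    and s_rv: "\<And>t i. s t i \<in> measurable M (count_space UNIV)"
    and tau_unif: "\<And>t i. distr M (count_space UNIV) (tau t i) = measure_pmf (pmf_of_set {1..m})"
    and s_unif: "\<And>t i. distr M (count_space UNIV) (s t i) = measure_pmf (pmf_of_set {1..m})"
    and indep: "prob_space.indep_vars M (\<lambda>_. count_space UNIV)
                  (\<lambda>(b, t, i). if b then tau t i else s t i) (UNIV :: (bool \<times> nat \<times> 'n) set)"
    and alpha_pos: "0 < \<alpha>"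
    and alpha_le: "\<alpha> \<le> sqrt (real CARD('n)) / (sqrt (8 * real m) * L)"
  shows "AE \<omega> in M.
     real_cond_exp M (filt M tau s k)
       (\<lambda>\<omega>. tk m (gt_x W grad m \<alpha> x0 (\<lambda>t i. tau t i \<omega>) (\<lambda>t i. s t i \<omega>) (Suc k))
                  (gt_z W grad m \<alpha> x0 (\<lambda>t i. tau t i \<omega>) (\<lambda>t i. s t i \<omega>) (Suc k))) \<omega>
     \<le> (1 - 1 / (4 * real m)) *
          tk m (gt_x W grad m \<alpha> x0 (\<lambda>t i. tau t i \<omega>) (\<lambda>t i. s t i \<omega>) k)
               (gt_z W grad m \<alpha> x0 (\<lambda>t i. tau t i \<omega>) (\<lambda>t i. s t i \<omega>) k)
        + 4 * real m * \<alpha>\<^sup>2 *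
            (norm (avg_grad grad m (gt_x W grad m \<alpha> x0 (\<lambda>t i. tau t i \<omega>) (\<lambda>t i. s t i \<omega>) k)))\<^sup>2
        + 9 / (4 * real m * real CARD('n)) *
            consensus_err (gt_x W grad m \<alpha> x0 (\<lambda>t i. tau t i \<omega>) (\<lambda>t i. s t i \<omega>) k)"
proof -
  interpret prob_space M by (rule P)
  define N where "N = real CARD('n)"
  define val :: "bool \<times> nat \<times> 'n \<Rightarrow> 'a \<Rightarrow> nat" where "val = (\<lambda>(b, t, i). if b then tau t i else s t i)"
  define T where "T = PiE (UNIV::'n set) (\<lambda>_. {1..m})"
  define cT where "cT = real (card T)"
  define Rall where "Rall = (\<lambda>\<omega>. restrict (\<lambda>j. val j \<omega>) (Iall k :: (bool \<times> nat \<times> 'n) set))"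
  define Rlt where "Rlt = (\<lambda>\<omega>. restrict (\<lambda>j. val j \<omega>) (Ilt k :: (bool \<times> nat \<times> 'n) set))"
  define taus where "taus = (\<lambda>(v::bool \<times> nat \<times> 'n \<Rightarrow> nat) t i. v (True, t, i))"
  define sss where "sss = (\<lambda>(v::bool \<times> nat \<times> 'n \<Rightarrow> nat) t i. v (False, t, i))"
  define Phi where "Phi = (\<lambda>v. tk m (gt_x W grad m \<alpha> x0 (taus v) (sss v) (Suc k)) (gt_z W grad m \<alpha> x0 (taus v) (sss v) (Suc k)))"
  define psi where "psi = (\<lambda>h. (\<Sum>\<tau>\<in>T. \<Sum>\<sigma>\<in>T. Phi (mrg k h \<tau> \<sigma>)) / (cT * cT))"
  define g where "g = (\<lambda>\<omega>. psi (Rlt \<omega>))"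
  define X where "X = (\<lambda>\<omega>. tk m (gt_x W grad m \<alpha> x0 (\<lambda>t i. tau t i \<omega>) (\<lambda>t i. s t i \<omega>) (Suc k))
                  (gt_z W grad m \<alpha> x0 (\<lambda>t i. tau t i \<omega>) (\<lambda>t i. s t i \<omega>) (Suc k)))"
  define xk where "xk = (\<lambda>\<omega>. gt_x W grad m \<alpha> x0 (\<lambda>t i. tau t i \<omega>) (\<lambda>t i. s t i \<omega>) k)"
  define zk where "zk = (\<lambda>\<omega>. gt_z W grad m \<alpha> x0 (\<lambda>t i. tau t i \<omega>) (\<lambda>t i. s t i \<omega>) k)"
  define B where "B = (\<lambda>\<omega>. (1 - 1 / (4 * real m)) * tk m (xk \<omega>) (zk \<omega>)
        + 4 * real m * \<alpha>\<^sup>2 * (norm (avg_grad grad m (xk \<omega>)))\<^sup>2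
        + 9 / (4 * real m * real CARD('n)) * consensus_err (xk \<omega>))"
  have col: "\<And>r. (\<Sum>i\<in>UNIV. W $ i $ r) = 1" using W unfolding nonneg_primitive_doubly_stochastic_def by blast
  have cTpos: "cT > 0" unfolding cT_def T_def using m by (simp add: card_PiE)
  have val_meas: "val j \<in> measurable M (count_space UNIV)" for j
    unfolding val_def using tau_rv s_rv by (cases j) auto
  have val_unif: "distr M (count_space UNIV) (val j) = measure_pmf (pmf_of_set {1..m})" for j
    unfolding val_def using tau_unif s_unif by (cases j) auto
  have ind: "indep_vars (\<lambda>_. count_space UNIV) val UNIV" using indep unfolding val_def .
  have aL: "\<alpha>\<^sup>2 * L\<^sup>2 \<le> real CARD('n) / (8 * real m)"
  proof -
    have pos: "sqrt (8 * real m) * L > 0" using m L by simp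
    have "\<alpha> * (sqrt (8 * real m) * L) \<le> sqrt (real CARD('n))"
      using alpha_le pos by (simp add: le_divide_eq)
    then have "(\<alpha> * (sqrt (8 * real m) * L))\<^sup>2 \<le> (sqrt (real CARD('n)))\<^sup>2"
      using alpha_pos pos by (intro power_mono) auto
    then have "\<alpha>\<^sup>2 * L\<^sup>2 * (8 * real m) \<le> real CARD('n)"
      by (simp add: power_mult_distrib algebra_simps)
    then show ?thesis using m by (simp add: le_divide_eq)
  qed
  have X_eq: "X \<omega> = Phi (Rall \<omega>)" for \<omega>
  proof -
    have "gt_saga W grad m \<alpha> x0 (\<lambda>t i. tau t i \<omega>) (\<lambda>t i. s t i \<omega>) (Suc k) = gt_saga W grad m \<alpha> x0 (taus (Rall \<omega>)) (sss (Rall \<omega>)) (Suc k)"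
      by (rule gt_saga_dep) (auto simp: taus_def sss_def Rall_def val_def mem_Iall)
    then show ?thesis unfolding X_def Phi_def gt_x_def gt_z_def by simp
  qed
  have bound: "g \<omega> \<le> B \<omega>" for \<omega>
  proof -
    have Phi_eq: "Phi (mrg k (Rlt \<omega>) \<tau> \<sigma>) = tkc m (avg (xk \<omega>) - \<alpha> *\<^sub>R avg (gt_g grad m (xk \<omega>) (zk \<omega>) \<tau>)) (\<lambda>i j. if j = \<sigma> i then xk \<omega> i else zk \<omega> i j)" for \<tau> \<sigma>
    proof -
      let ?v = "mrg k (Rlt \<omega>) \<tau> \<sigma>"
      have st: "gt_saga W grad m \<alpha> x0 (taus ?v) (sss ?v) k = gt_saga W grad m \<alpha> x0 (\<lambda>t i. tau t i \<omega>) (\<lambda>t i. s t i \<omega>) k"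
        by (rule gt_saga_dep) (auto simp: taus_def sss_def Rlt_def val_def mem_Ilt mrg_def)
      have x: "gt_x W grad m \<alpha> x0 (taus ?v) (sss ?v) k = xk \<omega>" unfolding gt_x_def xk_def st ..
      have z: "gt_z W grad m \<alpha> x0 (taus ?v) (sss ?v) k = zk \<omega>" unfolding gt_z_def zk_def st ..
      have tk: "taus ?v k = \<tau>" "sss ?v k = \<sigma>" by (auto simp: taus_def sss_def mrg_def)
      show ?thesis unfolding Phi_def gt_saga_step[OF col] x z tk ..
    qed
    have "g \<omega> = (\<Sum>\<tau>\<in>T. \<Sum>\<sigma>\<in>T. tkc m (avg (xk \<omega>) - \<alpha> *\<^sub>R avg (gt_g grad m (xk \<omega>) (zk \<omega>) \<tau>)) (\<lambda>i j. if j = \<sigma> i then xk \<omega> i else zk \<omega> i j)) / (cT * cT)"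
      unfolding g_def psi_def Phi_eq ..
    also have "\<dots> \<le> B \<omega>" unfolding B_def T_def cT_def by (rule DET[OF m smooth aL])
    finally show ?thesis .
  qed
  define Gen where "Gen = {tau t i -` A \<inter> space M | t i A. t < k} \<union> {s t i -` A \<inter> space M | t i A. t < k}"
  have F_eq: "filt M tau s k = sigma (space M) Gen" unfolding filt_def Gen_def ..
  have Gen_sub: "Gen \<subseteq> Pow (space M)" unfolding Gen_def by auto
  have Gen_M: "Gen \<subseteq> sets M" unfolding Gen_def using tau_rv s_rv by (auto intro!: measurable_sets)
  have spF: "space (filt M tau s k) = space M" unfolding F_eq by (rule space_measure_of_conv)
  have setsF: "sets (filt M tau s k) = sigma_sets (space M) Gen" unfolding F_eq using Gen_sub by (simp add: sets_measure_of)
  have subalg: "subalgebra M (filt M tau s k)"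
    unfolding subalgebra_def spF setsF using Gen_M by (simp add: sets.sigma_sets_subset)
  interpret FS: finite_measure_subalgebra M "filt M tau s k"
    by unfold_locales (rule subalg)
  have evF: "{\<omega>\<in>space (filt M tau s k). val j \<omega> = a} \<in> sets (filt M tau s k)" if j: "j \<in> Ilt k" for j a
  proof -
    obtain b t i where jj: "j = (b, t, i)" by (cases j) auto
    have t: "t < k" using j jj by (simp add: mem_Ilt)
    have "{\<omega>\<in>space M. val j \<omega> = a} \<in> Gen"
    proof (cases b)
      case True
      then have "{\<omega>\<in>space M. val j \<omega> = a} = tau t i -` {a} \<inter> space M" unfolding jj val_def by auto
      then show ?thesis unfolding Gen_def using t by blast
    next
      case False
      then have "{\<omega>\<in>space M. val j \<omega> = a} = s t i -` {a} \<inter> space M" unfolding jj val_def by auto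
      then show ?thesis unfolding Gen_def using t by blast
    qed
    then show ?thesis unfolding spF setsF by auto
  qed
  have g_measF: "g \<in> borel_measurable (filt M tau s k)"
    unfolding g_def Rlt_def by (rule meas_restrict[OF finite_Ilt evF])
  have setsF_char: "\<exists>B. A = {\<omega>\<in>space M. Rlt \<omega> \<in> B}" if A: "A \<in> sets (filt M tau s k)" for A
  proof -
    have "A \<in> sigma_sets (space M) Gen" using A setsF by simp
    then show ?thesis
    proof (induction rule: sigma_sets.induct)
      case (Basic a)
      then show ?case
      proof (cases rule: UnE[OF Basic[unfolded Gen_def]])
        case 1
        then obtain t i C where a: "a = tau t i -` C \<inter> space M" and t: "t < k" by blast
        have "a = {\<omega>\<in>space M. Rlt \<omega> \<in> {h. h (True, t, i) \<in> C}}"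
          unfolding a Rlt_def using t by (auto simp: val_def mem_Ilt)
        then show ?thesis by blast
      next
        case 2
        then obtain t i C where a: "a = s t i -` C \<inter> space M" and t: "t < k" by blast
        have "a = {\<omega>\<in>space M. Rlt \<omega> \<in> {h. h (False, t, i) \<in> C}}"
          unfolding a Rlt_def using t by (auto simp: val_def mem_Ilt)
        then show ?thesis by blast
      qed
    next
      case Empty
      have "{} = {\<omega>\<in>space M. Rlt \<omega> \<in> {}}" by simp
      then show ?case by blast
    next
      case (Compl a)
      then obtain B where "a = {\<omega>\<in>space M. Rlt \<omega> \<in> B}" by blast
      then have "space M - a = {\<omega>\<in>space M. Rlt \<omega> \<in> - B}" by auto
      then show ?case by blast
    next
      case (Union a)
      then have "\<forall>i. \<exists>B. a i = {\<omega>\<in>space M. Rlt \<omega> \<in> B}" by blast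
      then obtain B where "\<And>i. a i = {\<omega>\<in>space M. Rlt \<omega> \<in> B i}" by metis
      then have "(\<Union>i. a i) = {\<omega>\<in>space M. Rlt \<omega> \<in> (\<Union>i. B i)}" by auto
      then show ?case by blast
    qed
  qed
  have restr_all: "restrict (Rall \<omega>) (Ilt k) = Rlt \<omega>" for \<omega>
    unfolding Rall_def Rlt_def by (auto simp: fun_eq_iff mem_Ilt mem_Iall)
  note IR = integral_restrict[OF P val_meas val_unif ind finite_Iall Iall_ne m]
  have X_int: "integrable M X"
    using IR(1)[of Phi] unfolding X_eq[abs_def] Rall_def .
  have g_int: "integrable M g"
  proof -
    have "integrable M (\<lambda>\<omega>. psi (restrict (Rall \<omega>) (Ilt k)))"
      using IR(1)[of "\<lambda>v. psi (restrict v (Ilt k))"] unfolding Rall_def .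
    then show ?thesis unfolding g_def restr_all .
  qed
  have Dlt_ext: "h \<in> extensional (Ilt k)" if "h \<in> PiE (Ilt k) (\<lambda>_. {1..m})" for h
    using that by (simp add: PiE_def)
  have set_eq: "(\<integral>\<omega>\<in>A. X \<omega> \<partial>M) = (\<integral>\<omega>\<in>A. g \<omega> \<partial>M)" if A: "A \<in> sets (filt M tau s k)" for A
  proof -
    obtain C where C: "A = {\<omega>\<in>space M. Rlt \<omega> \<in> C}" using setsF_char[OF A] by blast
    define G1 where "G1 = (\<lambda>v. indicator C (restrict v (Ilt k)) * Phi v)"
    define G2 where "G2 = (\<lambda>v. indicator C (restrict v (Ilt k)) * psi (restrict v (Ilt k)))"
    have "(\<integral>\<omega>\<in>A. X \<omega> \<partial>M) = (\<integral>\<omega>. G1 (Rall \<omega>) \<partial>M)"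
      unfolding set_lebesgue_integral_def
      by (intro Bochner_Integration.integral_cong refl) (auto simp: C G1_def X_eq restr_all indicator_def)
    also have "\<dots> = (\<Sum>v\<in>PiE (Iall k) (\<lambda>_. {1..m}). G1 v) / real (card (PiE (Iall k :: (bool \<times> nat \<times> 'n) set) (\<lambda>_. {1..m})))"
      using IR(2)[of G1] unfolding Rall_def .
    also have "(\<Sum>v\<in>PiE (Iall k) (\<lambda>_. {1..m}). G1 v) = (\<Sum>v\<in>PiE (Iall k) (\<lambda>_. {1..m}). G2 v)"
    proof -
      have "(\<Sum>v\<in>PiE (Iall k) (\<lambda>_. {1..m}). G1 v) = (\<Sum>h\<in>PiE (Ilt k) (\<lambda>_. {1..m}). \<Sum>\<tau>\<in>T. \<Sum>\<sigma>\<in>T. G1 (mrg k h \<tau> \<sigma>))"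
        unfolding T_def by (rule sum_merge) simp
      also have "\<dots> = (\<Sum>h\<in>PiE (Ilt k) (\<lambda>_. {1..m}). indicator C h * (\<Sum>\<tau>\<in>T. \<Sum>\<sigma>\<in>T. Phi (mrg k h \<tau> \<sigma>)))"
        by (intro sum.cong refl) (simp add: G1_def restrict_mrg Dlt_ext sum_distrib_left)
      also have "\<dots> = (\<Sum>h\<in>PiE (Ilt k) (\<lambda>_. {1..m}). \<Sum>\<tau>\<in>T. \<Sum>\<sigma>\<in>T. G2 (mrg k h \<tau> \<sigma>))"
        using cTpos by (intro sum.cong refl) (simp add: G2_def restrict_mrg Dlt_ext psi_def cT_def[symmetric])
      also have "\<dots> = (\<Sum>v\<in>PiE (Iall k) (\<lambda>_. {1..m}). G2 v)"
        unfolding T_def by (rule sum_merge[symmetric]) simp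
      finally show ?thesis .
    qed
    also have "(\<Sum>v\<in>PiE (Iall k) (\<lambda>_. {1..m}). G2 v) / real (card (PiE (Iall k :: (bool \<times> nat \<times> 'n) set) (\<lambda>_. {1..m}))) = (\<integral>\<omega>. G2 (Rall \<omega>) \<partial>M)"
      using IR(2)[of G2] unfolding Rall_def ..
    also have "\<dots> = (\<integral>\<omega>\<in>A. g \<omega> \<partial>M)"
      unfolding set_lebesgue_integral_def
      by (intro Bochner_Integration.integral_cong refl) (auto simp: C G2_def g_def restr_all indicator_def)
    finally show ?thesis .
  qed
  have CE: "AE \<omega> in M. real_cond_exp M (filt M tau s k) X \<omega> = g \<omega>"
    by (rule FS.real_cond_exp_charact[OF set_eq X_int g_int g_measF])
  show ?thesis
    using CE
  proof eventually_elim
    case (elim \<omega>)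
    have "real_cond_exp M (filt M tau s k) X \<omega> \<le> B \<omega>" using elim bound[of \<omega>] by simp
    then show ?case unfolding X_def B_def xk_def zk_def .
  qed
qed

end
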